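(* Let $0<p_{\min}\le p_{\max}$ be vectors in $\mathbb{R}^n$, $\mathcal{D}_p=\{p:p_{\min}\le p\le p_{\max}\}$, and let $\mathcal{I}:\mathbb{R}^n_{\ge0}\to\mathbb{R}^n$ be differentiable and type-II standard with $\mathcal{I}(\mathcal{D}_p)\subseteq\mathcal{D}_p$. Let $f(x)=\ln\mathcal{I}(e^x)$ and define the matrix $B\in\mathbb{R}^{n\times n}$ by \[ B_{ij}=\max_{p\in\mathcal{D}_p}\Big|\frac{\partial\mathcal{I}_j(p)}{\partial p_i}\,\frac{p_i}{\mathcal{I}_j(p)}\Big|=\max_{x\in\ln\mathcal{D}_p}\Big|\frac{\partial f_j(x)}{\partial x_i}\Big|, \] and assume the spectral radius satisfies $\rho(B)<1$. Let $c\in\mathbb{R}^n$ with $c>0$, let $h:\mathbb{R}_{>0}\to\mathbb{R}^m$ be differentiable with each component strictly increasing (with positive derivative), and set \[ s=(I-B)^{-1}c,\qquad \kappa(p)=h\Big(\prod_{i=1}^n p_i^{s_i}\Big). \] Assume the problem $\min_{p\in\mathcal{D}_p}\kappa(p)$ s.t. $p\ge\mathcal{I}(p)$ is feasible. Then this problem is Fast-Lipschitz: the unique fixed point $p^\star=\mathcal{I}(p^\star)$ in $\mathcal{D}_p$ is its unique Pareto optimal solution.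
   Context: Inequalities are element-wise; $\ln,\exp$ act componentwise. $\mathcal{I}$ is type-II standard if for all $p,q\ge0$: $\mathcal{I}(p)>0$ (implied by two-sided scalability), (type-II monotonicity) $p\le q\Rightarrow\mathcal{I}(p)\ge\mathcal{I}(q)$, and (type-II scalability) for all $c>1$, $\mathcal{I}(cp)>(1/c)\mathcal{I}(p)$. For a vector objective, a feasible $p$ is Pareto optimal (minimization) if no feasible $q$ has $\kappa(q)\le\kappa(p)$, $\kappa(q)\neq\kappa(p)$. A problem is Fast-Lipschitz if its unique Pareto optimal solution is the unique solution of the fixed point equation of its constraint function. *)

theory Defs
  imports "HOL-Analysis.Analysis"
begin

text \<open>Vectors in R^n are real^'n; the order on real^'n is componentwise
(less_eq_vec_def).  Strict positivity is written out componentwise.\<close>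

definition pos_vec :: "real^'n \<Rightarrow> bool" where
  "pos_vec x \<longleftrightarrow> (\<forall>i. 0 < x $ i)"

definition nonneg_vec :: "real^'n \<Rightarrow> bool" where
  "nonneg_vec x \<longleftrightarrow> (\<forall>i. 0 \<le> x $ i)"

definition type_II_standard :: "(real^'n \<Rightarrow> real^'n) \<Rightarrow> bool" where
  "type_II_standard I \<longleftrightarrow>
     (\<forall>p. nonneg_vec p \<longrightarrow> pos_vec (I p)) \<and>
     (\<forall>p q. nonneg_vec p \<longrightarrow> nonneg_vec q \<longrightarrow> p \<le> q \<longrightarrow> I q \<le> I p) \<and>
     (\<forall>p (c::real). nonneg_vec p \<longrightarrow> c > 1 \<longrightarrow>
        (\<forall>j. I (c *\<^sub>R p) $ j > (1 / c) * I p $ j))"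

definition partial_deriv :: "(real^'n \<Rightarrow> real^'n) \<Rightarrow> 'n \<Rightarrow> 'n \<Rightarrow> real^'n \<Rightarrow> real" where
  "partial_deriv I i j p = frechet_derivative I (at p) (axis i 1) $ j"

definition complex_eigenvalue :: "real^'n^'n \<Rightarrow> complex \<Rightarrow> bool" where
  "complex_eigenvalue B l \<longleftrightarrow>
     (\<exists>v :: complex^'n. v \<noteq> 0 \<and>
        (\<chi> i j. complex_of_real (B $ i $ j)) *v v = l *s v)"

definition spectral_radius_real :: "real^'n^'n \<Rightarrow> real" where
  "spectral_radius_real B = Max {cmod l | l. complex_eigenvalue B l}"

definition pareto_optimal ::
  "('a \<Rightarrow> real^'m) \<Rightarrow> 'a set \<Rightarrow> 'a \<Rightarrow> bool" where
  "pareto_optimal kappa F p \<longleftrightarrow>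
     p \<in> F \<and> \<not> (\<exists>q\<in>F. kappa q \<le> kappa p \<and> kappa q \<noteq> kappa p)"

end

theory Submission
  imports Defs
begin


lemma smult_eq_cancel:
  fixes v :: "'a::field^'n"
  assumes "v \<noteq> 0" "l1 *s v = l2 *s v" shows "l1 = l2"
proof -
  obtain i where "v$i \<noteq> 0" using assms(1) by (metis vec_eq_iff zero_index)
  moreover have "l1 * v$i = l2 * v$i" using assms(2) by (metis vector_smult_component)
  ultimately show ?thesis by simp
qed

lemma eig_finite:
  fixes M :: "'a::field^'n^'n"
  shows "finite {l. \<exists>v. v \<noteq> 0 \<and> M *v v = l *s v}"
proof (rule ccontr)
  let ?E = "{l. \<exists>v. v \<noteq> 0 \<and> M *v v = l *s v}"
  assume inf: "infinite ?E"
  interpret LM: Vector_Spaces.linear "(*s)" "(*s)" "(*v) M" by simp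
  define ev where "ev l = (SOME v. v \<noteq> 0 \<and> M *v v = l *s v)" for l
  have ev: "ev l \<noteq> 0 \<and> M *v ev l = l *s ev l" if "l \<in> ?E" for l
  proof -
    have "\<exists>v. v \<noteq> 0 \<and> M *v v = l *s v" using that by simp
    then show ?thesis unfolding ev_def by (rule someI_ex)
  qed
  have indep: "vec.independent (ev ` L)" if "finite L" "L \<subseteq> ?E" for L
    using that
  proof (induction L rule: finite_induct)
    case empty
    then show ?case by (simp add: vec.independent_empty)
  next
    case (insert mu L)
    have ind: "vec.independent (ev ` L)" using insert by simp
    have mu: "mu \<in> ?E" using insert by simp
    define S where "S = ev ` L"
    have finS: "finite S" using insert unfolding S_def by simp
    define g where "g w = (SOME l. l \<in> L \<and> ev l = w)" for w
    have g: "g w \<in> L \<and> ev (g w) = w" if "w \<in> S" for w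
    proof -
      have "\<exists>l. l \<in> L \<and> ev l = w" using that unfolding S_def by auto
      then show ?thesis unfolding g_def by (rule someI_ex)
    qed
    have Mw: "M *v w = g w *s w" if "w \<in> S" for w
      using g[OF that] ev[of "g w"] insert.prems by auto
    have gmu: "g w \<noteq> mu" if "w \<in> S" for w using g[OF that] insert.hyps by auto
    have "ev mu \<notin> vec.span S"
    proof
      assume "ev mu \<in> vec.span S"
      then obtain u where u: "ev mu = (\<Sum>w\<in>S. u w *s w)"
        using vec.span_finite[OF finS] by auto
      have "mu *s ev mu = M *v ev mu" using ev[OF mu] by simp
      also have "\<dots> = (\<Sum>w\<in>S. u w *s (M *v w))" unfolding u by (simp only: vec.sum[of M] vec.scale[of M])
      also have "\<dots> = (\<Sum>w\<in>S. (u w * g w) *s w)"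
        by (rule sum.cong) (simp_all add: Mw)
      finally have eq1: "(\<Sum>w\<in>S. (mu * u w) *s w) = (\<Sum>w\<in>S. (u w * g w) *s w)"
        unfolding u by (simp add: vec.scale_sum_right)
      have "(\<Sum>w\<in>S. (u w * (g w - mu)) *s w) = (\<Sum>w\<in>S. (u w * g w) *s w - (mu * u w) *s w)"
        by (rule sum.cong) (simp_all add: algebra_simps vec.scale_left_diff_distrib)
      also have "\<dots> = 0" using eq1 by (simp add: sum_subtractf)
      finally have eq0: "(\<Sum>w\<in>S. (u w * (g w - mu)) *s w) = 0" .
      have allc: "\<forall>c. (\<Sum>v\<in>S. c v *s v) = 0 \<longrightarrow> (\<forall>v\<in>S. c v = 0)"
        using ind[folded S_def, unfolded vec.independent_explicit] by (rule conjunct2)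
      have "\<forall>w\<in>S. u w * (g w - mu) = 0"
        using allc[rule_format, of "\<lambda>w. u w * (g w - mu)", OF eq0] by blast
      then have "\<forall>w\<in>S. u w = 0" using gmu by auto
      then have "ev mu = 0" unfolding u by (simp add: sum.neutral)
      then show False using ev[OF mu] by simp
    qed
    then show ?case using ind unfolding S_def image_insert by (rule vec.independent_insertI)
  qed
  have injev: "inj_on ev ?E"
  proof (rule inj_onI)
    fix a b assume ab: "a \<in> ?E" "b \<in> ?E" "ev a = ev b"
    have ea: "ev a \<noteq> 0" "M *v ev a = a *s ev a" using ev[OF ab(1)] by auto
    have "M *v ev a = b *s ev a" using ev[OF ab(2)] ab(3) by simp
    then have "a *s ev a = b *s ev a" using ea(2) by simp
    then show "a = b" using smult_eq_cancel[OF ea(1)] by blast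
  qed
  define d where "d = vec.dim (UNIV :: ('a^'n) set)"
  obtain L where L: "L \<subseteq> ?E" "finite L" "card L = Suc d"
    using infinite_arbitrarily_large[OF inf] by blast
  have "card (ev ` L) = Suc d" using L(3) card_image[OF inj_on_subset[OF injev L(1)]] by simp
  moreover have "card (ev ` L) \<le> d"
    using vec.independent_card_le_dim[OF subset_UNIV indep[OF L(2) L(1)]] unfolding d_def .
  ultimately show False by simp
qed

lemma rho_ge:
  fixes B :: "real^'n^'n"
  assumes "complex_eigenvalue B l"
  shows "cmod l \<le> spectral_radius_real B"
proof -
  have fin: "finite {l. complex_eigenvalue B l}"
    unfolding complex_eigenvalue_def by (rule eig_finite)
  have "{cmod l | l. complex_eigenvalue B l} = cmod ` {l. complex_eigenvalue B l}" by auto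
  then have "finite {cmod l | l. complex_eigenvalue B l}" using fin by simp
  then show ?thesis unfolding spectral_radius_real_def using assms by (auto intro: Max_ge)
qed

lemma real_eig:
  fixes B :: "real^'n^'n" and v :: "real^'n"
  assumes "v \<noteq> 0" "B *v v = r *s v"
  shows "complex_eigenvalue B (complex_of_real r)"
  unfolding complex_eigenvalue_def
proof (intro exI conjI)
  let ?cv = "(\<chi> i. complex_of_real (v$i))"
  show "?cv \<noteq> 0" using assms(1) by (auto simp: vec_eq_iff)
  show "(\<chi> i j. complex_of_real (B $ i $ j)) *v ?cv = complex_of_real r *s ?cv"
  proof -
    have "(B *v v)$i = r * v$i" for i using assms(2) by simp
    then show ?thesis
      by (simp add: vec_eq_iff matrix_vector_mult_def flip: of_real_mult of_real_sum)
  qed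
qed

lemma collatz:
  fixes B :: "real^'n^'n" and v :: "real^'n"
  assumes Bnn: "\<And>i j. 0 \<le> B$i$j" and vnn: "\<And>i. 0 \<le> v$i" and v0: "v \<noteq> 0"
    and Bv: "\<And>i. v$i \<le> (B *v v)$i"
  shows "\<exists>r w. 1 \<le> r \<and> w \<noteq> 0 \<and> B *v w = r *s w"
proof -
  define K where "K = {w::real^'n. (\<forall>i. 0 \<le> w$i) \<and> sum (\<lambda>i. w$i) UNIV = 1 \<and> (\<forall>i. w$i \<le> (B *v w)$i)}"
  define f where "f w = (1 / sum (\<lambda>i. (B *v w)$i) UNIV) *\<^sub>R (B *v w)" for w
  have mv: "(B *v w)$i = (\<Sum>j\<in>UNIV. B$i$j * w$j)" for w i by (simp add: matrix_vector_mult_def)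
  have mono: "(B *v w)$i \<le> (B *v w')$i" if "\<And>j. w$j \<le> w'$j" for w w' i
    unfolding mv by (rule sum_mono) (simp add: Bnn mult_left_mono that)
  have Bnn_v: "0 \<le> (B *v w)$i" if "\<And>j. 0 \<le> w$j" for w i
    unfolding mv by (simp add: Bnn sum_nonneg that)
  have sumge: "1 \<le> sum (\<lambda>i. (B *v w)$i) UNIV" if "w \<in> K" for w
  proof -
    have "sum (\<lambda>i. w$i) UNIV \<le> sum (\<lambda>i. (B *v w)$i) UNIV"
      using that unfolding K_def by (intro sum_mono) auto
    then show ?thesis using that unfolding K_def by simp
  qed
  have closedK: "closed K"
    unfolding K_def mv
    by (intro closed_Collect_conj closed_Collect_all closed_Collect_le closed_Collect_eq continuous_intros)
  have bK: "bounded K"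
    unfolding bounded_iff
  proof (intro exI ballI)
    fix w assume "w \<in> K"
    then show "norm w \<le> 1" using norm_le_l1_cart[of w] unfolding K_def by simp
  qed
  have compK: "compact K" using closedK bK by (simp add: compact_eq_bounded_closed)
  have convK: "convex K"
    unfolding convex_def
  proof (intro ballI allI impI)
    fix x y :: "real^'n" and u w :: real
    assume xy: "x \<in> K" "y \<in> K" and uw: "0 \<le> u" "0 \<le> w" "u + w = 1"
    have e: "B *v (u *\<^sub>R x + w *\<^sub>R y) = u *\<^sub>R (B *v x) + w *\<^sub>R (B *v y)"
      by (simp add: matrix_vector_right_distrib matrix_vector_mult_scaleR)
    have "sum (\<lambda>i. (u *\<^sub>R x + w *\<^sub>R y)$i) UNIV = u * sum (\<lambda>i. x$i) UNIV + w * sum (\<lambda>i. y$i) UNIV"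
      by (simp add: sum.distrib sum_distrib_left)
    moreover have "(u *\<^sub>R x + w *\<^sub>R y)$i \<le> (B *v (u *\<^sub>R x + w *\<^sub>R y))$i" for i
    proof -
      have "x$i \<le> (B *v x)$i" "y$i \<le> (B *v y)$i" using xy unfolding K_def by auto
      then have "u * x$i + w * y$i \<le> u * (B *v x)$i + w * (B *v y)$i"
        using uw by (intro add_mono mult_left_mono) auto
      then show ?thesis unfolding e by simp
    qed
    ultimately show "u *\<^sub>R x + w *\<^sub>R y \<in> K"
      using xy uw unfolding K_def
      by (auto intro!: add_nonneg_nonneg mult_nonneg_nonneg)
  qed
  have sv: "0 < sum (\<lambda>i. v$i) UNIV"
  proof -
    obtain i where "v$i \<noteq> 0" using v0 by (metis vec_eq_iff zero_index)
    then have "0 < v$i" using vnn[of i] by simp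
    also have "v$i \<le> sum (\<lambda>i. v$i) UNIV" by (rule member_le_sum) (auto simp: vnn)
    finally show ?thesis .
  qed
  define w0 where "w0 = (1 / sum (\<lambda>i. v$i) UNIV) *\<^sub>R v"
  have "w0 \<in> K"
    using sv unfolding K_def w0_def
    by (auto simp: vnn matrix_vector_mult_scaleR sum_divide_distrib[symmetric] Bv intro!: mult_left_mono divide_right_mono)
  then have Kne: "K \<noteq> {}" by auto
  have contf: "continuous_on K f"
    unfolding f_def mv
    by (intro continuous_intros) (use sumge in \<open>fastforce simp: mv\<close>)
  have fK: "f \<in> K \<rightarrow> K"
  proof
    fix w assume wK: "w \<in> K"
    define s where "s = sum (\<lambda>i. (B *v w)$i) UNIV"
    have s1: "1 \<le> s" using sumge[OF wK] unfolding s_def .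
    have wnn: "\<And>j. 0 \<le> w$j" using wK unfolding K_def by auto
    have wB: "\<And>j. w$j \<le> (B *v w)$j" using wK unfolding K_def by auto
    have "0 \<le> f w $ i" for i unfolding f_def s_def[symmetric] using s1 Bnn_v[OF wnn] by simp
    moreover have "sum (\<lambda>i. f w $ i) UNIV = 1"
      unfolding f_def using s1 unfolding s_def by (simp add: sum_divide_distrib[symmetric])
    moreover have "f w $ i \<le> (B *v f w) $ i" for i
    proof -
      have "(B *v w)$i \<le> (B *v (B *v w))$i" by (rule mono) (rule wB)
      then show ?thesis unfolding f_def s_def[symmetric] using s1
        by (simp add: matrix_vector_mult_scaleR divide_right_mono)
    qed
    ultimately show "f w \<in> K" unfolding K_def by auto
  qed
  obtain w where wK: "w \<in> K" and fw: "f w = w"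
    using brouwer[OF compK convK Kne contf fK] by blast
  define s where "s = sum (\<lambda>i. (B *v w)$i) UNIV"
  have s1: "1 \<le> s" using sumge[OF wK] unfolding s_def .
  have "B *v w = s *s w"
  proof -
    have "(1 / s) *\<^sub>R (B *v w) = w" using fw unfolding f_def s_def .
    then have "B *v w = s *\<^sub>R w" using s1 by (metis (no_types) divide_eq_0_iff one_neq_zero scaleR_scaleR
      nonzero_mult_div_cancel_left scaleR_one times_divide_eq_right zero_le_one not_one_le_zero)
    then show ?thesis by (simp add: scalar_mult_eq_scaleR)
  qed
  moreover have "w \<noteq> 0" using wK unfolding K_def by auto
  ultimately show ?thesis using s1 by blast
qed



lemma vec_sum_axis: "(\<Sum>i\<in>UNIV. (f i) *\<^sub>R axis i (1::real)) $ k = (f k :: real)"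
  by (simp add: sum_component axis_def if_distrib cong: if_cong)

lemma log_bound:
  fixes I :: "real^'n \<Rightarrow> real^'n" and y q :: "real^'n" and B :: "real^'n^'n"
  assumes yq: "y \<le> q" and ypos: "\<forall>i. 0 < y$i"
  and Ipos: "\<And>p. y \<le> p \<Longrightarrow> p \<le> q \<Longrightarrow> 0 < I p $ j"
  and Idiff: "\<And>p. y \<le> p \<Longrightarrow> p \<le> q \<Longrightarrow> I differentiable (at p)"
  and Bb: "\<And>i p. y \<le> p \<Longrightarrow> p \<le> q \<Longrightarrow> \<bar>partial_deriv I i j p * p$i / I p $ j\<bar> \<le> B$i$j"
  shows "ln (I y $ j) - (\<Sum>i\<in>UNIV. B$i$j * (ln (q$i) - ln (y$i))) \<le> ln (I q $ j)"
proof -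
  define e where "e i = ln (q$i) - ln (y$i)" for i
  have qpos: "0 < q$i" for i using ypos yq by (metis less_eq_vec_def order_less_le_trans)
  have e0: "0 \<le> e i" for i using yq ypos qpos unfolding e_def less_eq_vec_def by simp
  define K where "K = (\<Sum>i\<in>UNIV. B$i$j * e i)"
  define P where "P t = (\<Sum>i\<in>UNIV. (y$i * exp (t * e i)) *\<^sub>R axis i (1::real))" for t
  define P' where "P' t = (\<Sum>i\<in>UNIV. (y$i * exp (t * e i) * e i) *\<^sub>R axis i (1::real))" for t
  have Pc: "P t $ k = y$k * exp (t * e k)" for t k unfolding P_def by (rule vec_sum_axis)
  have P0: "P 0 = y" by (simp add: vec_eq_iff Pc)
  have P1: "P 1 = q" using ypos qpos by (auto simp add: vec_eq_iff Pc e_def exp_diff less_imp_neq[symmetric])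
  have Pin: "y \<le> P t \<and> P t \<le> q" if "0 \<le> t" "t \<le> 1" for t
  proof -
    have "y$k \<le> P t $ k \<and> P t $ k \<le> q$k" for k
    proof -
      have "1 \<le> exp (t * e k)" using e0[of k] that by simp
      moreover have "exp (t * e k) \<le> exp (e k)" using e0[of k] that
        by (simp add: mult_left_le_one_le)
      moreover have "y$k * exp (e k) = q$k" using ypos[rule_format, of k] qpos[of k] by (simp add: e_def exp_diff)
      ultimately show ?thesis using ypos[rule_format, of k] unfolding Pc
        by (metis mult_le_cancel_left1 mult_left_mono less_imp_le order_trans order_refl)
    qed
    then show ?thesis by (simp add: less_eq_vec_def)
  qed
  have Pder: "(P has_vector_derivative P' t) (at t)" for t
    unfolding P_def P'_def
    by (auto intro!: derivative_eq_intros simp: mult_ac)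
  define phi where "phi t = ln (I (P t) $ j) + t * K" for t
  have "phi 0 \<le> phi 1"
  proof (rule DERIV_nonneg_imp_nondecreasing[of 0 1 phi])
    fix t :: real assume t: "0 \<le> t" "t \<le> 1"
    define D where "D = frechet_derivative I (at (P t))"
    have ID: "(I has_derivative D) (at (P t))"
      using Idiff[OF Pin[OF t, THEN conjunct1] Pin[OF t, THEN conjunct2]]
      unfolding D_def by (simp add: frechet_derivative_works)
    have linD: "linear D" using ID by (rule has_derivative_linear)
    have c1: "((\<lambda>t. I (P t)) has_vector_derivative D (P' t)) (at t)"
      using vector_derivative_diff_chain_within[OF Pder[of t] has_derivative_at_withinI[OF ID]]
        by (simp add: o_def)
    have c2: "((\<lambda>t. I (P t) $ j) has_real_derivative (D (P' t)) $ j) (at t)"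
      using bounded_linear.has_vector_derivative[OF bounded_linear_vec_nth c1, of j]
      by (simp add: has_real_derivative_iff_has_vector_derivative)
    have pos: "0 < I (P t) $ j" using Pin[OF t] Ipos by blast
    have c3: "(phi has_real_derivative ((D (P' t)) $ j / I (P t) $ j + K)) (at t)"
      unfolding phi_def
      by (rule derivative_eq_intros c2 | use pos in simp)+
    have Dv: "(D (P' t)) $ j = (\<Sum>i\<in>UNIV. (y$i * exp (t * e i) * e i) * partial_deriv I i j (P t))"
      unfolding P'_def partial_deriv_def D_def[symmetric]
      using linD by (simp add: linear_sum linear_scale sum_component)
    have "0 \<le> (D (P' t)) $ j / I (P t) $ j + K"
    proof -
      have "(D (P' t)) $ j / I (P t) $ j + K
         = (\<Sum>i\<in>UNIV. e i * (partial_deriv I i j (P t) * P t $ i / I (P t) $ j + B$i$j))"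
        unfolding Dv K_def by (simp add: sum_divide_distrib sum.distrib[symmetric] Pc algebra_simps)
      also have "\<dots> \<ge> 0"
      proof (rule sum_nonneg)
        fix i :: 'n
        have "0 \<le> partial_deriv I i j (P t) * P t $ i / I (P t) $ j + B$i$j"
          using Bb[of "P t" i] Pin[OF t] by linarith
        then show "0 \<le> e i * (partial_deriv I i j (P t) * P t $ i / I (P t) $ j + B$i$j)"
          using e0 by simp
      qed
      finally show ?thesis .
    qed
    then show "\<exists>y. (phi has_real_derivative y) (at t) \<and> 0 \<le> y" using c3 by blast
  qed simp
  then show ?thesis unfolding phi_def P0 P1 K_def e_def by simp
qed


lemma no_big_eig:
  fixes B :: "real^'n^'n"
  assumes "spectral_radius_real B < 1" "w \<noteq> 0" "B *v w = r *s w"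
  shows "\<bar>r\<bar> < 1"
  using rho_ge[OF real_eig[OF assms(2,3)]] assms(1) by simp

lemma open_pos: "open {p::real^'n. \<forall>i. 0 < p$i}"
proof -
  have "{p::real^'n. \<forall>i. 0 < p$i} = (\<Inter>i\<in>UNIV. {p. 0 < p$i})" by auto
  also have "open \<dots>" by (intro open_INT ballI open_Collect_less continuous_intros) simp_all
  finally show ?thesis .
qed

lemma aux1: "0 \<le> (b::real) \<Longrightarrow> -(b * s) \<le> b * max 0 (-s)"
  using mult_left_mono[of "-s" "max 0 (-s)" b] by simp

theorem mainTheorem4:
  fixes pmin pmax :: "real^'n"
    and I :: "real^'n \<Rightarrow> real^'n"
    and B :: "real^'n^'n"
    and c :: "real^'n"
    and h :: "real \<Rightarrow> real^'m"
  assumes pmin_pos: "pos_vec pmin"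
    and pmin_le: "pmin \<le> pmax"
    and I_diff: "I differentiable_on {p. nonneg_vec p}"
    and I_std: "type_II_standard I"
    and I_maps: "\<forall>p\<in>{pmin..pmax}. I p \<in> {pmin..pmax}"
    and B_max: "\<forall>i j.
        (\<exists>p\<in>{pmin..pmax}. B $ i $ j = \<bar>partial_deriv I i j p * p $ i / I p $ j\<bar>) \<and>
        (\<forall>p\<in>{pmin..pmax}. \<bar>partial_deriv I i j p * p $ i / I p $ j\<bar> \<le> B $ i $ j)"
    and rho: "spectral_radius_real B < 1"
    and c_pos: "pos_vec c"
    and h_diff: "\<forall>t>0. h differentiable (at t)"
    and h_mono: "\<forall>k. strict_mono_on {0<..} (\<lambda>t. h t $ k)"
    and h_deriv_pos: "\<forall>k. \<forall>t>0. deriv (\<lambda>t. h t $ k) t > 0"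
    and feasible: "\<exists>p\<in>{pmin..pmax}. I p \<le> p"
  shows "let s = matrix_inv (mat 1 - B) *v c;
             kappa = (\<lambda>p::real^'n. h (\<Prod>i\<in>UNIV. p $ i powr s $ i));
             F = {p \<in> {pmin..pmax}. I p \<le> p}
         in \<exists>pstar. pstar \<in> {pmin..pmax} \<and> I pstar = pstar \<and>
              (\<forall>q\<in>{pmin..pmax}. I q = q \<longrightarrow> q = pstar) \<and>
              pareto_optimal kappa F pstar \<and>
              (\<forall>q. pareto_optimal kappa F q \<longrightarrow> q = pstar)"
proof -
  let ?D = "{pmin..pmax}"
  have Dpos: "0 < p$i" if "p \<in> ?D" for p i
  proof -
    have "pmin$i \<le> p$i" using that by (simp add: less_eq_vec_def)
    moreover have "0 < pmin$i" using pmin_pos unfolding pos_vec_def by blast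
    ultimately show ?thesis by linarith
  qed
  have Dnn: "nonneg_vec p" if "p \<in> ?D" for p
    using Dpos[OF that] unfolding nonneg_vec_def by (simp add: less_imp_le)
  have Ipos: "0 < I p $ j" if "p \<in> ?D" for p j
    using I_std Dnn[OF that] unfolding type_II_standard_def pos_vec_def by blast
  have Imono: "I q \<le> I p" if "nonneg_vec p" "nonneg_vec q" "p \<le> q" for p q
    using I_std that unfolding type_II_standard_def by blast
  have Idiffat: "I differentiable (at p)" if "\<forall>i. 0 < p$i" for p
  proof -
    have sub: "{p::real^'n. \<forall>i. 0 < p$i} \<subseteq> {p. nonneg_vec p}"
      unfolding nonneg_vec_def by (auto simp: less_imp_le)
    have "p \<in> interior {p. nonneg_vec p}"
      using interior_maximal[OF sub open_pos] that by auto
    then have eq: "at p within {p. nonneg_vec p} = at p" by (rule at_within_interior)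
    have "I differentiable (at p within {p. nonneg_vec p})"
    proof -
      have "p \<in> {p. nonneg_vec p}" using sub that by blast
      then show ?thesis using I_diff unfolding differentiable_on_def by blast
    qed
    then show ?thesis unfolding eq .
  qed
  have Bnn: "0 \<le> B$i$j" for i j
  proof -
    obtain p where "B $ i $ j = \<bar>partial_deriv I i j p * p $ i / I p $ j\<bar>"
      using B_max[THEN spec[of _ i], THEN spec[of _ j], THEN conjunct1] by blast
    then show ?thesis by simp
  qed
  define A where "A = mat 1 - B"
  have Ax: "A *v x = x - B *v x" for x
    unfolding A_def by (simp only: matrix_vector_mult_diff_rdistrib matrix_vector_mul_lid)
  have Bx: "B *v x = 1 *s x" if "A *v x = 0" for x
  proof -
    have "x - B *v x = 0" using that Ax[of x] by argo
    then have "B *v x = x" by (metis right_minus_eq)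
    then show ?thesis by (simp only: vector_smult_lid)
  qed
  have ker: "\<forall>x. A *v x = 0 \<longrightarrow> x = 0"
  proof (intro allI impI)
    fix x assume x0: "A *v x = 0"
    show "x = 0"
    proof (rule ccontr)
      assume "x \<noteq> 0"
      from no_big_eig[OF rho this Bx[OF x0]] show False by simp
    qed
  qed
  have invA: "invertible A"
    using ker unfolding invertible_left_inverse matrix_left_invertible_ker[symmetric] .
  have AAi: "A ** matrix_inv A = mat 1"
  proof -
    have ex: "\<exists>A'. A ** A' = mat 1 \<and> A' ** A = mat 1" using invA unfolding invertible_def .
    have "A ** matrix_inv A = mat 1 \<and> matrix_inv A ** A = mat 1"
      unfolding matrix_inv_def using someI_ex[OF ex] .
    then show ?thesis by (rule conjunct1)
  qed
  define s where "s = matrix_inv (mat 1 - B) *v c"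
  have As: "A *v s = c"
  proof -
    have "A *v s = (A ** matrix_inv A) *v c" unfolding s_def A_def[symmetric]
      by (rule matrix_vector_mul_assoc)
    then show ?thesis unfolding AAi matrix_vector_mul_lid .
  qed
  have sfix: "s$i = (B *v s)$i + c$i" for i
  proof -
    have "c = s - B *v s" using As Ax[of s] by argo
    then have "c$i = s$i - (B *v s)$i" by simp
    then show ?thesis by simp
  qed
  have cpos: "0 < c$i" for i using c_pos unfolding pos_vec_def by blast
  have mvB: "(B *v w)$i = (\<Sum>j\<in>UNIV. B$i$j * w$j)" for w i by (simp add: matrix_vector_mult_def)
  have snn: "0 \<le> s$i" for i
  proof -
    define m where "m = (\<chi> i. max 0 (- s$i))"
    have mnn: "0 \<le> m$i" for i unfolding m_def by simp
    have mB: "m$i \<le> (B *v m)$i" for i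
    proof (cases "s$i < 0")
      case True
      have "- (B *v s)$i \<le> (B *v m)$i"
        unfolding mvB sum_negf[symmetric]
        by (rule sum_mono) (simp add: m_def aux1 Bnn)
      then show ?thesis using True sfix[of i] cpos[of i] unfolding m_def by simp
    next
      case False
      have "0 \<le> (B *v m)$i" unfolding mvB by (simp add: sum_nonneg Bnn mnn)
      then show ?thesis using False unfolding m_def by simp
    qed
    have "m = 0"
    proof (rule ccontr)
      assume "m \<noteq> 0"
      from collatz[OF Bnn mnn this mB] obtain r w where rw: "1 \<le> r" "w \<noteq> 0" "B *v w = r *s w" by blast
      have "\<bar>r\<bar> < 1" using no_big_eig[OF rho rw(2,3)] .
      with rw(1) show False by linarith
    qed
    then have "m$i = 0" by simp
    then show ?thesis unfolding m_def by (simp add: max_def split: if_splits)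
  qed
  have key: "0 < (\<Sum>i\<in>UNIV. s$i * (ln (x$i) - ln (y$i)))"
    if yD: "y \<in> ?D" and yfix: "I y = y" and xD: "x \<in> ?D" and xf: "I x \<le> x" and xy: "x \<noteq> y" for x y
  proof -
    define d where "d i = ln (x$i) - ln (y$i)" for i
    define dp where "dp i = max (d i) 0" for i
    define dm where "dm i = max (- d i) 0" for i
    define q where "q = (\<chi> i. max (x$i) (y$i))"
    have qD: "q \<in> ?D" using xD yD unfolding q_def by (auto simp: less_eq_vec_def le_max_iff_disj)
    have yq: "y \<le> q" and xq: "x \<le> q" unfolding q_def by (auto simp: less_eq_vec_def)
    have lnq: "ln (q$i) - ln (y$i) = dp i" for i
      using Dpos[OF xD, of i] Dpos[OF yD, of i] unfolding q_def dp_def d_def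
      by (auto simp: max_def)
    have between: "p \<in> ?D" if "y \<le> p" "p \<le> q" for p
      using that yD qD by (auto intro: order_trans)
    have bound: "- (\<Sum>i\<in>UNIV. B$i$j * dp i) \<le> d j" for j
    proof -
      have lb: "ln (I y $ j) - (\<Sum>i\<in>UNIV. B$i$j * (ln (q$i) - ln (y$i))) \<le> ln (I q $ j)"
        apply (rule log_bound[OF yq])
        using Dpos[OF yD] apply blast
        using Ipos between apply blast
        using Idiffat Dpos between apply blast
        using B_max between by blast
      have "I q \<le> I x" using Imono[OF Dnn[OF xD] Dnn[OF qD] xq] .
      then have "I q $ j \<le> x $ j" using xf by (metis less_eq_vec_def order_trans)
      then have "ln (I q $ j) \<le> ln (x$j)" using Ipos[OF qD, of j] by simp
      with lb show ?thesis unfolding lnq yfix d_def by simp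
    qed
    have dmb: "dm j \<le> (\<Sum>i\<in>UNIV. B$i$j * dp i)" for j
    proof -
      have "0 \<le> (\<Sum>i\<in>UNIV. B$i$j * dp i)" by (intro sum_nonneg) (simp add: Bnn dp_def)
      then show ?thesis using bound[of j] unfolding dm_def by simp
    qed
    have ddec: "d i = dp i - dm i" for i unfolding dp_def dm_def by (simp add: max_def)
    have "(\<Sum>j\<in>UNIV. s$j * dm j) \<le> (\<Sum>j\<in>UNIV. s$j * (\<Sum>i\<in>UNIV. B$i$j * dp i))"
      by (intro sum_mono mult_left_mono dmb snn)
    also have "\<dots> = (\<Sum>j\<in>UNIV. \<Sum>i\<in>UNIV. s$j * (B$i$j * dp i))"
      by (simp add: sum_distrib_left)
    also have "\<dots> = (\<Sum>i\<in>UNIV. \<Sum>j\<in>UNIV. s$j * (B$i$j * dp i))"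
      by (rule sum.swap)
    also have "\<dots> = (\<Sum>i\<in>UNIV. dp i * (B *v s)$i)"
      unfolding mvB by (simp add: sum_distrib_left mult_ac)
    also have "\<dots> = (\<Sum>i\<in>UNIV. dp i * s$i) - (\<Sum>i\<in>UNIV. dp i * c$i)"
    proof -
      have "dp i * s$i = dp i * (B *v s)$i + dp i * c$i" for i using sfix[of i] by (simp add: algebra_simps)
      then show ?thesis by (simp add: sum.distrib)
    qed
    finally have ineq: "(\<Sum>i\<in>UNIV. dp i * c$i) \<le> (\<Sum>i\<in>UNIV. s$i * d i)"
      unfolding ddec by (simp add: algebra_simps sum_subtractf)
    have "\<exists>i. 0 < dp i"
    proof (rule ccontr)
      assume nex: "\<not> (\<exists>i. 0 < dp i)"
      have dp0: "dp i = 0" for i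
      proof -
        have "\<not> 0 < dp i" using nex by blast
        moreover have "0 \<le> dp i" unfolding dp_def by simp
        ultimately show ?thesis by linarith
      qed
      have "dm j = 0" for j using dmb[of j] unfolding dp0 by (simp add: dm_def)
      then have "d i = 0" for i using ddec dp0 by simp
      then have "x$i = y$i" for i
      proof -
        have "ln (x$i) = ln (y$i)" using \<open>\<And>i. d i = 0\<close>[of i] unfolding d_def by simp
        then show ?thesis using Dpos[OF xD, of i] Dpos[OF yD, of i] by simp
      qed
      then show False using xy by (simp add: vec_eq_iff)
    qed
    then obtain i0 where "0 < dp i0" by blast
    then have "0 < (\<Sum>i\<in>UNIV. dp i * c$i)"
      by (intro sum_pos2[of UNIV i0]) (auto simp: cpos dp_def less_imp_le)
    with ineq show ?thesis unfolding d_def by simp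
  qed
  define g where "g p = (\<Prod>i\<in>UNIV. p $ i powr s $ i)" for p :: "real^'n"
  have gpos: "0 < g p" if "p \<in> ?D" for p unfolding g_def using Dpos[OF that] by (auto intro!: prod_pos simp: less_imp_neq[symmetric])
  have lng: "ln (g p) = (\<Sum>i\<in>UNIV. s$i * ln (p$i))" if "p \<in> ?D" for p
    unfolding g_def using Dpos[OF that] by (simp add: ln_prod less_imp_neq[symmetric])
  have glt: "g y < g x"
    if "y \<in> ?D" "I y = y" "x \<in> ?D" "I x \<le> x" "x \<noteq> y" for x y
  proof -
    have "ln (g y) < ln (g x)"
      using key[OF that] unfolding lng[OF that(1)] lng[OF that(3)]
      by (simp add: algebra_simps sum_subtractf)
    then show ?thesis using gpos that by simp
  qed
  obtain pstar where pD: "pstar \<in> ?D" and pfix: "I pstar = pstar"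
  proof -
    have "compact ?D" by (simp add: interval_cbox_cart)
    moreover have "convex ?D" by (simp add: interval_cbox_cart)
    moreover have "?D \<noteq> {}" using pmin_le by auto
    moreover have "continuous_on ?D I"
      using differentiable_imp_continuous_on[OF I_diff] by (rule continuous_on_subset) (use Dnn in blast)
    moreover have "I \<in> ?D \<rightarrow> ?D" using I_maps by blast
    ultimately show ?thesis using brouwer that by blast
  qed
  define kappa where "kappa p = h (g p)" for p
  let ?F = "{p \<in> ?D. I p \<le> p}"
  have hlt: "h a $ k < h b $ k" if "0 < a" "a < b" for a b k
    using h_mono that unfolding strict_mono_on_def by auto
  have dom_imp: "g q < g p" if "p \<in> ?D" "q \<in> ?D" "kappa q \<le> kappa p" "kappa q \<noteq> kappa p" for p q
  proof (rule ccontr)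
    assume "\<not> g q < g p"
    then consider "g q = g p" | "g p < g q" by fastforce
    then show False
    proof cases
      case 1 then show False using that unfolding kappa_def by simp
    next
      case 2
      have "h (g p) $ k < h (g q) $ k" for k using hlt[OF gpos[OF that(1)] 2] .
      moreover have "h (g q) $ undefined \<le> h (g p) $ undefined"
        using that(3) unfolding kappa_def less_eq_vec_def by blast
      ultimately show False by (meson not_le)
    qed
  qed
  have imp_dom: "kappa q \<le> kappa p \<and> kappa q \<noteq> kappa p" if "q \<in> ?D" "g q < g p" for p q
  proof -
    have lt: "h (g q) $ k < h (g p) $ k" for k using hlt[OF gpos[OF that(1)] that(2)] .
    then show ?thesis unfolding kappa_def less_eq_vec_def
      by (metis less_imp_le order_less_irrefl)
  qed
  have pF: "pstar \<in> ?F" using pD pfix by simp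
  have uniqfix: "\<forall>q\<in>?D. I q = q \<longrightarrow> q = pstar"
  proof (intro ballI impI)
    fix q assume q: "q \<in> ?D" "I q = q"
    show "q = pstar"
    proof (rule ccontr)
      assume ne: "q \<noteq> pstar"
      have "g pstar < g q" using glt[OF pD pfix q(1) _ ne] q(2) by simp
      moreover have "g q < g pstar" using glt[OF q(1) q(2) pD _ ne[symmetric]] pfix by simp
      ultimately show False by simp
    qed
  qed
  have po: "pareto_optimal kappa ?F pstar"
    unfolding pareto_optimal_def
  proof (intro conjI pF notI)
    assume "\<exists>q\<in>?F. kappa q \<le> kappa pstar \<and> kappa q \<noteq> kappa pstar"
    then obtain q where q: "q \<in> ?F" "kappa q \<le> kappa pstar" "kappa q \<noteq> kappa pstar" by blast
    have "g q < g pstar" using dom_imp[OF pD _ q(2,3)] q(1) by simp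
    moreover have "q \<noteq> pstar" using q(3) by auto
    then have "g pstar < g q" using glt[OF pD pfix] q(1) by simp
    ultimately show False by simp
  qed
  have uniqpo: "\<forall>q. pareto_optimal kappa ?F q \<longrightarrow> q = pstar"
  proof (intro allI impI)
    fix q assume "pareto_optimal kappa ?F q"
    then have qF: "q \<in> ?F" and nd: "\<not> (\<exists>r\<in>?F. kappa r \<le> kappa q \<and> kappa r \<noteq> kappa q)"
      unfolding pareto_optimal_def by auto
    show "q = pstar"
    proof (rule ccontr)
      assume "q \<noteq> pstar"
      then have "g pstar < g q" using glt[OF pD pfix] qF by simp
      then have "kappa pstar \<le> kappa q \<and> kappa pstar \<noteq> kappa q" using imp_dom pD by blast
      then show False using nd pF by blast
    qed
  qed
  have kd: "(\<lambda>p::real^'n. h (\<Prod>i\<in>UNIV. p $ i powr s $ i)) = kappa"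
    unfolding kappa_def g_def by simp
  show ?thesis
    unfolding Let_def s_def[symmetric] kd
    using pD pfix uniqfix po uniqpo by blast
qed

end
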